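(* For every integer $w\ge 2$ and every $y\in[(1-2^{-w})^{1/2},1)$, \[g(y,w)\le K_w\, g\big((1-2^{-w})^{1/2},w\big)=0.15\,K_w\,\alpha^{-l_w}\,w\,(2c)^{-w}\left(1-2^{-w}\right)^{-1},\] where $K_2=1.11614$, $K_3=1.03$, $K_4=1.01$ and $K_w=1$ for all $w\ge 5$. In particular $K_{w+1}\le K_w$ for all $w\ge 2$.
   Context: Constants: $c=0.7$, $\alpha=1-10^{-4}$, $\psi=13/10$, $\chi=1/2$, and for a positive integer $w$, $l_w=\lceil\log_6(w+1)\rceil$. The function $g$ is \[g(y,w)=c^{-w}\alpha^{-l_w}\,w\,\frac{1-y^2}{y^2}\left(1-(1-y^2)^{1/w}\right)\left(\psi-\left(\frac{(1-y^2)^{1/w}}{1-(1-y^2)^{1/w}}\right)^{\chi}\right).\] *)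

theory Defs
  imports Complex_Main
begin

definition c_const :: real where "c_const = 7/10"
definition alpha_const :: real where "alpha_const = 1 - 10 powr (-4)"
definition psi_const :: real where "psi_const = 13/10"
definition chi_const :: real where "chi_const = 1/2"

definition l_w :: "nat \<Rightarrow> int" where
  "l_w w = \<lceil>log 6 (real w + 1)\<rceil>"

definition g :: "real \<Rightarrow> nat \<Rightarrow> real" where
  "g y w = c_const powr (- real w) * alpha_const powr (- real_of_int (l_w w)) * real w
     * ((1 - y\<^sup>2) / y\<^sup>2)
     * (1 - (1 - y\<^sup>2) powr (1 / real w))
     * (psi_const - ((1 - y\<^sup>2) powr (1 / real w) / (1 - (1 - y\<^sup>2) powr (1 / real w))) powr chi_const)"

definition K :: "nat \<Rightarrow> real" where
  "K w = (if w = 2 then 1.11614 else if w = 3 then 1.03 else if w = 4 then 1.01 else 1)"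

end

theory Submission
  imports Defs
begin

fun peval :: "real list \<Rightarrow> real \<Rightarrow> real" where
  "peval [] x = 0"
| "peval (c # cs) x = c + x * peval cs x"

fun padd :: "real list \<Rightarrow> real list \<Rightarrow> real list" where
  "padd [] q = q"
| "padd p [] = p"
| "padd (a # p) (b # q) = (a + b) # padd p q"

lemma peval_padd: "peval (padd p q) x = peval p x + peval q x"
  by (induction p q rule: padd.induct) (auto simp: algebra_simps)

definition mlin :: "real \<Rightarrow> real list \<Rightarrow> real list" where
  "mlin a p = padd (map ((*) a) p) (0 # p)"

lemma peval_map: "peval (map ((*) a) p) x = a * peval p x"
  by (induction p) (auto simp: algebra_simps)

lemma peval_mlin: "peval (mlin a p) x = (a + x) * peval p x"
  by (simp add: mlin_def peval_padd peval_map algebra_simps)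

fun shift :: "real \<Rightarrow> real list \<Rightarrow> real list" where
  "shift a [] = []"
| "shift a (c # cs) = padd [c] (mlin a (shift a cs))"

lemma peval_shift: "peval (shift a p) x = peval p (a + x)"
  by (induction p) (auto simp: peval_padd peval_mlin)

fun lb :: "real list \<Rightarrow> real \<Rightarrow> real" where
  "lb [] d = 0"
| "lb (c # cs) d = c + min 0 (d * lb cs d)"

lemma lb_le: "0 \<le> x \<Longrightarrow> x \<le> d \<Longrightarrow> lb p d \<le> peval p x"
proof (induction p)
  case Nil then show ?case by simp
next
  case (Cons c cs)
  then have ih: "lb cs d \<le> peval cs x" by simp
  have "min 0 (d * lb cs d) \<le> x * lb cs d"
  proof (cases "lb cs d \<ge> 0")
    case True then show ?thesis using Cons.prems by (simp add: min_le_iff_disj)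
  next
    case False then have "d * lb cs d \<le> x * lb cs d" using Cons.prems
      by (intro mult_right_mono_neg) auto
    then show ?thesis by (simp add: min_le_iff_disj)
  qed
  also have "\<dots> \<le> x * peval cs x" using ih Cons.prems by (intro mult_left_mono) auto
  finally show ?case by simp
qed

fun chk :: "real list \<Rightarrow> real list \<Rightarrow> bool" where
  "chk p (a # b # bs) = (a < b \<and> 0 < lb (shift a p) (b - a) \<and> chk p (b # bs))"
| "chk p _ = True"

lemma chk_pos: "chk p (a # b # bs) \<Longrightarrow> a \<le> u \<Longrightarrow> u \<le> last (b # bs) \<Longrightarrow> 0 < peval p u"
proof (induction bs arbitrary: a b)
  case Nil
  then have "0 < lb (shift a p) (b - a)" by simp
  also have "\<dots> \<le> peval (shift a p) (u - a)" using Nil by (intro lb_le) auto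
  finally show ?case by (simp add: peval_shift)
next
  case (Cons c bs)
  show ?case
  proof (cases "u \<le> b")
    case True
    have "0 < lb (shift a p) (b - a)" using Cons by simp
    also have "\<dots> \<le> peval (shift a p) (u - a)" using Cons True by (intro lb_le) auto
    finally show ?thesis by (simp add: peval_shift)
  next
    case False
    then show ?thesis using Cons.IH[of b c] Cons.prems by simp
  qed
qed

lemma c2: "chk [981767126580723712, 0, 2808858279936, 0, -19014176, 15625] [0, 512, 768, 832, 848, 864, 872, 876, 878, 879, 880, 881, 882, 884, 888, 896, 1024]"
  by (simp add: mlin_def)
lemma c3: "chk [84937273245696, 0, 82946555904, 0, 30375936, 0, -69092, 875] [0, 32, 48, 56, 58, 59, 60, 64]"
  by (simp add: mlin_def)
lemma c4: "chk [222101348810752, 0, 1084479242240, 0, 2118123520, 0, 2068480, 0, -25192, 625] [0, 16, 24, 28, 30, 31, 32]"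
  by (simp add: mlin_def)
lemma c5: "chk [52776558133248, 3298534883328, 1443109011456, 90194313216, 17716740096, 1107296256, 132120576, 8257536, 700416, 43776, -10288, -3] [0, 16]"
  by (simp add: mlin_def)

lemma i2: "peval [981767126580723712, 0, 2808858279936, 0, -19014176, 15625] (1024*t)
  = (879609302220800000/3) * (3*(111614/100000)*(1+t^2)*((1+t^2)^2 - t^4) - 20*3*t^4*(13/10 - t))"
  by (simp add: field_simps power_def numeral_eq_Suc)
lemma i3: "peval [84937273245696, 0, 82946555904, 0, 30375936, 0, -69092, 875] (64*t)
  = 27487790694400 * (3*(103/100)*(1+t^2)*((1+t^2)^3 - t^6) - 20*7*t^6*(13/10 - t))"
  by (simp add: field_simps power_def numeral_eq_Suc)
lemma i4: "peval [222101348810752, 0, 1084479242240, 0, 2118123520, 0, 2068480, 0, -25192, 625] (32*t)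
  = (219902325555200/3) * (3*(101/100)*(1+t^2)*((1+t^2)^4 - t^8) - 20*15*t^8*(13/10 - t))"
  by (simp add: field_simps power_def numeral_eq_Suc)
lemma i5: "(1 - t) * peval [52776558133248, 3298534883328, 1443109011456, 90194313216, 17716740096, 1107296256, 132120576, 8257536, 700416, 43776, -10288, -3] (16*t)
  = 17592186044416 * (3*(1+t^2)^6 - 640*t^10*(13/10 - t))"
  by (simp add: field_simps power_def numeral_eq_Suc)

lemma polyK:
  fixes t :: real
  assumes w: "w \<in> {2,3,4}" and t: "0 < t" "t \<le> 1"
  shows "20*(2^w-1)*(t^2)^w*(13/10-t) \<le> 3*K w*(1+t^2)*((1+t^2)^w - (t^2)^w)"
proof -
  have pm: "(t^2)^w = t^(2*w)" by (simp add: power_mult)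
  consider "w = 2" | "w = 3" | "w = 4" using w by auto
  then show ?thesis
  proof cases
    case 1
    have "0 < peval [981767126580723712, 0, 2808858279936, 0, -19014176, 15625] (1024*t)"
      by (rule chk_pos[OF c2]) (use t in auto)
    then have "0 < 3*(111614/100000)*(1+t^2)*((1+t^2)^2 - t^4) - 20*3*t^4*(13/10 - t)"
      unfolding i2 by (rule zero_less_mult_pos[of _ "_::real"]) simp_all
    then show ?thesis using 1 by (simp add: K_def pm)
  next
    case 2
    have "0 < peval [84937273245696, 0, 82946555904, 0, 30375936, 0, -69092, 875] (64*t)"
      by (rule chk_pos[OF c3]) (use t in auto)
    then have "0 < 3*(103/100)*(1+t^2)*((1+t^2)^3 - t^6) - 20*7*t^6*(13/10 - t)"
      unfolding i3 by (rule zero_less_mult_pos[of _ "_::real"]) simp_all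
    then show ?thesis using 2 by (simp add: K_def pm)
  next
    case 3
    have "0 < peval [222101348810752, 0, 1084479242240, 0, 2118123520, 0, 2068480, 0, -25192, 625] (32*t)"
      by (rule chk_pos[OF c4]) (use t in auto)
    then have "0 < 3*(101/100)*(1+t^2)*((1+t^2)^4 - t^8) - 20*15*t^8*(13/10 - t)"
      unfolding i4 by (rule zero_less_mult_pos[of _ "_::real"]) simp_all
    then show ?thesis using 3 by (simp add: K_def pm)
  qed
qed

lemma poly5:
  fixes t :: real
  assumes t: "0 < t" "t \<le> 1"
  shows "640*(t^2)^5*(13/10-t) \<le> 3*(1+t^2)^6"
proof -
  have "0 < peval [52776558133248, 3298534883328, 1443109011456, 90194313216, 17716740096, 1107296256, 132120576, 8257536, 700416, 43776, -10288, -3] (16*t)"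
    by (rule chk_pos[OF c5]) (use t in auto)
  then have "0 \<le> (1 - t) * peval [52776558133248, 3298534883328, 1443109011456, 90194313216, 17716740096, 1107296256, 132120576, 8257536, 700416, 43776, -10288, -3] (16*t)"
    using t by simp
  then have "0 \<le> 3*(1+t^2)^6 - 640*t^10*(13/10 - t)"
    unfolding i5 by (simp add: zero_le_mult_iff)
  then show ?thesis by (simp add: power_mult[symmetric])
qed

lemma Bbound:
  assumes w: "2 \<le> w" and t: "0 < t" "t \<le> 1"
  defines "s \<equiv> t^2/(1+t^2)"
  shows "s^w/(1-s^w)*(1-s)*(13/10-t) \<le> K w*3/(20*(2^w-1))"
proof -
  define a where "a = t^2"
  have a: "0 < a" "a \<le> 1" using t by (auto simp: a_def power_le_one)
  have s: "s = a/(1+a)" by (simp add: s_def a_def)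
  have E: "a^w < (1+a)^w" using a w by (intro power_strict_mono) auto
  have p2: "(1::real) < 2^w" using w by (simp add: one_less_power)
  have sw: "s^w/(1-s^w) = a^w/((1+a)^w - a^w)"
    using a E by (simp add: s power_divide field_simps)
  have s1: "1 - s = 1/(1+a)" using a by (simp add: s field_simps)
  show ?thesis
  proof (cases "w \<le> 4")
    case True
    then have w': "w \<in> {2,3,4}" using w by auto
    have P: "20*(2^w-1)*a^w*(13/10-t) \<le> 3*K w*(1+a)*((1+a)^w - a^w)"
      using polyK[OF w' t] by (simp add: a_def)
    have "s^w/(1-s^w)*(1-s)*(13/10-t) = a^w*(13/10-t)/((1+a)*((1+a)^w - a^w))"
      by (simp add: sw s1)
    also have "\<dots> \<le> K w*3/(20*(2^w-1))"
    proof -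
      have D: "0 < (1+a)*((1+a)^w - a^w)" using E a by simp
      have c: "0 < 20*((2::real)^w-1)" using p2 by simp
      have "a^w*(13/10-t) = (20*(2^w-1)*a^w*(13/10-t))/(20*(2^w-1))" using c by simp
      also have "\<dots> \<le> (3*K w*(1+a)*((1+a)^w - a^w))/(20*(2^w-1))"
        using P c by (intro divide_right_mono) auto
      also have "\<dots> = K w*3/(20*(2^w-1)) * ((1+a)*((1+a)^w - a^w))" by simp
      finally show ?thesis using D by (simp add: pos_divide_le_eq)
    qed
    finally show ?thesis .
  next
    case False
    define z where "z = 2*s"
    have z: "0 < z" "z \<le> 1" using a by (auto simp: z_def s field_simps)
    have sl: "s^w < 1" using z w by (simp add: z_def power_less_one_iff)
    have zw: "z^w \<le> 1" using z by (intro power_le_one) auto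
    have "s^w/(1-s^w) = z^w/(2^w - z^w)"
      using z p2 sl by (simp add: z_def power_mult_distrib field_simps)
    also have "\<dots> \<le> z^w/(2^w-1)"
    proof -
      have "0 < 2^w - z^w" using zw p2 by simp
      then show ?thesis using z p2 zw by (intro divide_left_mono) (auto intro: mult_pos_pos)
    qed
    also have "\<dots> \<le> z^5/(2^w-1)"
      using z p2 False by (intro divide_right_mono power_decreasing) auto
    finally have A: "s^w/(1-s^w) \<le> z^5/(2^w-1)" .
    have pos: "0 \<le> (1-s)*(13/10-t)" using t a by (simp add: s1)
    have "s^w/(1-s^w)*(1-s)*(13/10-t) \<le> z^5/(2^w-1)*((1-s)*(13/10-t))"
      using mult_right_mono[OF A pos] by (simp add: mult_ac)
    also have "\<dots> \<le> (3/20)/(2^w-1)"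
    proof -
      have P: "640*a^5*(13/10-t) \<le> 3*(1+a)^6" using poly5[OF t] by (simp add: a_def)
      have "z^5*((1-s)*(13/10-t)) = 32*a^5*(13/10-t)/(1+a)^6"
      proof -
        have h6: "(1+a)^6 = (1+a)^5*(1+a)" by (simp add: eval_nat_numeral)
        show ?thesis using a by (simp add: z_def s s1 power_mult_distrib power_divide field_simps h6)
      qed
      also have "\<dots> \<le> 3/20" using P a by (simp add: divide_le_eq)
      finally have "z^5*((1-s)*(13/10-t)) \<le> 3/20" .
      from divide_right_mono[OF this, of "2^w-1"] p2 show ?thesis by simp
    qed
    also have "\<dots> = K w*3/(20*(2^w-1))" using False by (simp add: K_def)
    finally show ?thesis .
  qed
qed

lemma g_alt:
  "g y w = (c_const powr (- real w) * alpha_const powr (- real_of_int (l_w w)) * real w)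
     * ((1 - y\<^sup>2) / y\<^sup>2) * (1 - (1 - y\<^sup>2) powr (1 / real w))
     * (13/10 - ((1 - y\<^sup>2) powr (1 / real w) / (1 - (1 - y\<^sup>2) powr (1 / real w))) powr (1/2))"
  by (simp add: g_def psi_const_def chi_const_def)

theorem lemma27:
  shows "(\<forall>w::nat. w \<ge> 2 \<longrightarrow>
            (\<forall>y::real. sqrt (1 - 2 powr (- real w)) \<le> y \<and> y < 1 \<longrightarrow>
               g y w \<le> K w * g (sqrt (1 - 2 powr (- real w))) w)
          \<and> K w * g (sqrt (1 - 2 powr (- real w))) w
              = 0.15 * K w * alpha_const powr (- real_of_int (l_w w)) * real w
                * (2 * c_const) powr (- real w) * (1 - 2 powr (- real w)) powr (-1))
        \<and> (\<forall>w::nat. w \<ge> 2 \<longrightarrow> K (w + 1) \<le> K w)"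
proof (intro conjI allI impI)
  fix w :: nat assume w: "2 \<le> w"
  define A where "A = c_const powr (- real w) * alpha_const powr (- real_of_int (l_w w)) * real w"
  have alpha: "0 < alpha_const" unfolding alpha_const_def
  proof -
    have "(10::real) powr (-4) < 10 powr 0" by (intro powr_less_mono) auto
    then show "0 < 1 - (10::real) powr (-4)" by simp
  qed
  have A: "0 < A" unfolding A_def using w alpha by (simp add: c_const_def)
  define p where "p = (2::real) powr (- real w)"
  have p2: "(1::real) < 2^w" using w by (simp add: one_less_power)
  have p: "p = 1/2^w" by (simp add: p_def powr_minus powr_realpow divide_inverse)
  have p0: "0 < p" "p < 1" using p2 by (auto simp: p)
  have ppow: "p powr (1/real w) = 1/2"
  proof -
    have "p powr (1/real w) = 2 powr (- real w * (1 / real w))" by (simp add: p_def powr_powr)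
    also have "\<dots> = 2 powr (-1)" using w by simp
    finally show ?thesis by (simp add: powr_minus)
  qed
  define y0 where "y0 = sqrt (1 - p)"
  have y0sq: "y0^2 = 1 - p" unfolding y0_def by (rule real_sqrt_pow2) (use p0 in simp)
  have y00: "0 < y0" using p0 by (simp add: y0_def)
  have gy0: "g y0 w = A * (p/(1-p)) * (3/20)"
    unfolding g_alt A_def[symmetric] y0sq using p0 by (simp add: ppow)
  have pp: "p/(1-p) = 1/(2^w-1)" using p2 by (simp add: p field_simps)
  show "K w * g (sqrt (1 - 2 powr (- real w))) w
              = 0.15 * K w * alpha_const powr (- real_of_int (l_w w)) * real w
                * (2 * c_const) powr (- real w) * (1 - 2 powr (- real w)) powr (-1)"
  proof -
    have "(2 * c_const) powr (- real w) = p * c_const powr (- real w)"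
    proof -
      have "(2*(7/10::real)) powr (- real w) = 2 powr (- real w) * (7/10) powr (- real w)"
        using powr_mult[of 2 "7/10" "- real w"] by simp
      then show ?thesis by (simp add: p_def c_const_def)
    qed
    moreover have "(1 - 2 powr (- real w)) powr (-1) = 1/(1-p)"
      unfolding p_def[symmetric] using p0 powr_minus[of "1-p" 1] by simp
    ultimately show ?thesis using gy0 unfolding y0_def[symmetric] p_def[symmetric] A_def
      by (simp add: field_simps)
  qed
  fix y :: real assume y: "sqrt (1 - 2 powr (- real w)) \<le> y \<and> y < 1"
  then have yy: "y0 \<le> y" "y < 1" by (auto simp: y0_def p_def)
  define r where "r = 1 - y^2"
  have "y0^2 \<le> y^2" using yy y00 by (intro power_mono) auto
  then have r: "r \<le> p" using y0sq by (simp add: r_def)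
  have "y^2 < 1" using yy y00 by (simp add: power_less_one_iff abs_less_iff power2_less_1_iff[of y] )
  then have r0: "0 < r" by (simp add: r_def)
  define s where "s = r powr (1/real w)"
  have s0: "0 < s" using r0 by (simp add: s_def)
  have sh: "s \<le> 1/2" unfolding s_def ppow[symmetric] using r r0 by (intro powr_mono2) auto
  have sw: "s^w = r"
  proof -
    have "s^w = s powr real w" using s0 by (simp add: powr_realpow)
    also have "\<dots> = r" using w r0 by (simp add: s_def powr_powr)
    finally show ?thesis .
  qed
  define q where "q = s/(1-s)"
  have q: "0 < q" "q \<le> 1" using s0 sh by (auto simp: q_def field_simps)
  define t where "t = sqrt q"
  have t: "0 < t" "t \<le> 1" using q by (auto simp: t_def)
  have tq: "q powr (1/2) = t" using q by (simp add: t_def powr_half_sqrt)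
  have st: "s = t^2/(1+t^2)" using q s0 sh by (simp add: t_def q_def field_simps)
  have gy: "g y w = A * (s^w/(1-s^w)*(1-s)*(13/10-t))"
    unfolding g_alt A_def[symmetric] r_def[symmetric] s_def[symmetric] q_def[symmetric] tq
    using r0 by (simp add: sw r_def)
  have B: "s^w/(1-s^w)*(1-s)*(13/10-t) \<le> K w*3/(20*(2^w-1))"
    using Bbound[OF w t] by (simp add: st)
  have "g y w \<le> A * (K w*3/(20*(2^w-1)))" unfolding gy by (rule mult_left_mono[OF B]) (use A in simp)
  also have "\<dots> = K w * g y0 w" using gy0 pp by (simp add: mult_ac)
  finally show "g y w \<le> K w * g (sqrt (1 - 2 powr (- real w))) w" by (simp add: y0_def p_def)
next
  fix w :: nat assume "2 \<le> w"
  then show "K (w + 1) \<le> K w" by (simp add: K_def)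
qed

end
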